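(* Fix an agent $i$ in an $N$-agent Markov game with finite state space $\mathcal S$ and finite action spaces, and fix the other agents' joint policy to be the demonstrator policy $\pi_E^{(-i)}$. Let $\lambda>0$ and let $\psi:\mathbb R^{\mathcal S\times\mathcal A^{(1)}\times\cdots\times\mathcal A^{(N)}}\to\overline{\mathbb R}$ be a closed proper convex function. Define $$\mathrm{RL}^{(i)}(r^{(i)})=\arg\max_{\pi^{(i)}}\ \lambda H(\pi^{(i)})+\mathbb E_{\pi^{(i)},\pi_E^{(-i)}}[r^{(i)}(s,a^{(i)},a^{(-i)})],$$ $$\mathrm{IRL}^{(i)}_\psi(\pi_E^{(i)})=\arg\max_{r^{(i)}}\ -\psi(r^{(i)})-\max_{\pi^{(i)}}\big(\lambda H(\pi^{(i)})+\mathbb E_{\pi^{(i)},\pi_E^{(-i)}}[r^{(i)}]\big)+\mathbb E_{\pi_E}[r^{(i)}],$$ and assume the optimizers involved are unique. Then the policy obtained by running $\mathrm{RL}^{(i)}$ on the reward recovered by $\mathrm{IRL}^{(i)}_\psi$ satisfies $$\mathrm{RL}^{(i)}\circ\mathrm{IRL}^{(i)}_\psi(\pi_E^{(i)})=\arg\min_{\pi^{(i)}}\ -\lambda H(\pi^{(i)})+\psi^*\big(\rho_{\pi^{(i)},\pi_E^{(-i)}}-\rho_{\pi_E}\big),$$ i.e. this IRL problem is the dual of an occupancy-measure matching problem with regularizer $\psi$, and the induced policy is its primal optimum.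
   Context: A Markov game with $N$ agents is $\langle N,\mathcal S,\mathcal A^{(1)},\dots,\mathcal A^{(N)},P,r^{(1)},\dots,r^{(N)},\rho_0,\gamma\rangle$ with transition kernel $P$, initial-state distribution $\rho_0$, discount $\gamma\in[0,1)$, and rewards $r^{(i)}:\mathcal S\times\mathcal A^{(1)}\times\cdots\times\mathcal A^{(N)}\to\mathbb R$. Agent $i$ has policy $\pi^{(i)}(a^{(i)}\mid s)$; $-i$ denotes all agents other than $i$; $\pi=(\pi^{(i)},\pi^{(-i)})$ is the joint policy, and $\pi_E=(\pi_E^{(i)},\pi_E^{(-i)})$ is the demonstrators' joint policy. For any $f$, $\mathbb E_{\pi}[f(s,a)]=\mathbb E[\sum_{t\ge0}\gamma^t f(s_t,a_t)]$ with $s_0\sim\rho_0$, $a_t\sim\pi(\cdot\mid s_t)$, $s_{t+1}\sim P(\cdot\mid s_t,a_t)$. $H(\pi^{(i)})$ is the $\gamma$-discounted causal entropy $\mathbb E_{\pi}[-\log\pi^{(i)}(a^{(i)}\mid s)]$. The occupancy measure of a joint policy $\pi$ is $\rho_\pi(s,a)=\pi(a\mid s)\sum_{t\ge0}\gamma^tP(s_t=s\mid\pi)$, and $\rho_{\pi^{(i)},\pi^{(-i)}}$ denotes $\rho_\pi$ for $\pi=(\pi^{(i)},\pi^{(-i)})$. The conjugate is taken with the sign convention adapted to rewards: $\psi^*(x)=\sup_{r}\big(-\langle x,r\rangle-\psi(r)\big)$, where $\langle x,r\rangle=\sum_{s,a}x(s,a)r(s,a)$. *)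

theory Defs
  imports "HOL-Analysis.Analysis" "HOL-Library.Extended_Real" "HOL-Library.Liminf_Limsup"
begin

definition joint_actions :: "('n \<Rightarrow> 'b set) \<Rightarrow> ('n \<Rightarrow> 'b) set" where
  "joint_actions A = (\<Pi>\<^sub>E j\<in>UNIV. A j)"

definition markov_game ::
  "('n::finite \<Rightarrow> 'b set) \<Rightarrow> ('s::finite \<Rightarrow> ('n \<Rightarrow> 'b) \<Rightarrow> 's \<Rightarrow> real) \<Rightarrow> ('s \<Rightarrow> real) \<Rightarrow> real \<Rightarrow> bool" where
  "markov_game A T rho0 gamma \<longleftrightarrow>
     (\<forall>j. finite (A j) \<and> A j \<noteq> {}) \<and>
     (\<forall>s. \<forall>a\<in>joint_actions A. (\<forall>s'. T s a s' \<ge> 0) \<and> (\<Sum>s'\<in>UNIV. T s a s') = 1) \<and>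
     (\<forall>s. rho0 s \<ge> 0) \<and> (\<Sum>s\<in>UNIV. rho0 s) = 1 \<and>
     0 \<le> gamma \<and> gamma < 1"

text \<open>Stochastic (Markov, stationary) policies of agent j: p s b = pol^(j)(b | s).\<close>
definition policies :: "('n \<Rightarrow> 'b set) \<Rightarrow> 'n \<Rightarrow> ('s \<Rightarrow> 'b \<Rightarrow> real) set" where
  "policies A j = {p. \<forall>s. (\<forall>b. p s b \<ge> 0) \<and> (\<forall>b. b \<notin> A j \<longrightarrow> p s b = 0)
                        \<and> (\<Sum>b\<in>A j. p s b) = 1}"

definition joint_policy :: "('n::finite \<Rightarrow> 's \<Rightarrow> 'b \<Rightarrow> real) \<Rightarrow> 's \<Rightarrow> ('n \<Rightarrow> 'b) \<Rightarrow> real" where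
  "joint_policy P s a = (\<Prod>j\<in>UNIV. P j s (a j))"

fun state_dist ::
  "('n \<Rightarrow> 'b set) \<Rightarrow> ('s::finite \<Rightarrow> ('n \<Rightarrow> 'b) \<Rightarrow> 's \<Rightarrow> real) \<Rightarrow> ('s \<Rightarrow> real)
    \<Rightarrow> ('s \<Rightarrow> ('n \<Rightarrow> 'b) \<Rightarrow> real) \<Rightarrow> nat \<Rightarrow> 's \<Rightarrow> real" where
  "state_dist A T rho0 pol 0 = rho0"
| "state_dist A T rho0 pol (Suc t) =
     (\<lambda>s'. \<Sum>s\<in>UNIV. \<Sum>a\<in>joint_actions A. state_dist A T rho0 pol t s * pol s a * T s a s')"

definition disc_exp ::
  "('n \<Rightarrow> 'b set) \<Rightarrow> ('s::finite \<Rightarrow> ('n \<Rightarrow> 'b) \<Rightarrow> 's \<Rightarrow> real) \<Rightarrow> ('s \<Rightarrow> real) \<Rightarrow> real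
    \<Rightarrow> ('s \<Rightarrow> ('n \<Rightarrow> 'b) \<Rightarrow> real) \<Rightarrow> ('s \<Rightarrow> ('n \<Rightarrow> 'b) \<Rightarrow> real) \<Rightarrow> real" where
  "disc_exp A T rho0 gamma pol f =
     (\<Sum>t. gamma ^ t * (\<Sum>s\<in>UNIV. \<Sum>a\<in>joint_actions A. state_dist A T rho0 pol t s * pol s a * f s a))"

definition occupancy ::
  "('n \<Rightarrow> 'b set) \<Rightarrow> ('s::finite \<Rightarrow> ('n \<Rightarrow> 'b) \<Rightarrow> 's \<Rightarrow> real) \<Rightarrow> ('s \<Rightarrow> real) \<Rightarrow> real
    \<Rightarrow> ('s \<Rightarrow> ('n \<Rightarrow> 'b) \<Rightarrow> real) \<Rightarrow> 's \<Rightarrow> ('n \<Rightarrow> 'b) \<Rightarrow> real" where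
  "occupancy A T rho0 gamma pol s a = pol s a * (\<Sum>t. gamma ^ t * state_dist A T rho0 pol t s)"

definition causal_entropy ::
  "('n::finite \<Rightarrow> 'b set) \<Rightarrow> ('s::finite \<Rightarrow> ('n \<Rightarrow> 'b) \<Rightarrow> 's \<Rightarrow> real) \<Rightarrow> ('s \<Rightarrow> real) \<Rightarrow> real
    \<Rightarrow> ('n \<Rightarrow> 's \<Rightarrow> 'b \<Rightarrow> real) \<Rightarrow> 'n \<Rightarrow> real" where
  "causal_entropy A T rho0 gamma P i =
     disc_exp A T rho0 gamma (joint_policy P) (\<lambda>s a. - ln (P i s (a i)))"

text \<open>The reward space R^{S x A^(1) x ... x A^(N)}, represented as functions vanishing
  outside the joint action space.\<close>
definition rewards :: "('n \<Rightarrow> 'b set) \<Rightarrow> ('s \<Rightarrow> ('n \<Rightarrow> 'b) \<Rightarrow> real) set" where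
  "rewards A = {r. \<forall>s a. a \<notin> joint_actions A \<longrightarrow> r s a = 0}"

definition inner_sa :: "('n \<Rightarrow> 'b set) \<Rightarrow> ('s::finite \<Rightarrow> ('n \<Rightarrow> 'b) \<Rightarrow> real)
    \<Rightarrow> ('s \<Rightarrow> ('n \<Rightarrow> 'b) \<Rightarrow> real) \<Rightarrow> real" where
  "inner_sa A x r = (\<Sum>s\<in>UNIV. \<Sum>a\<in>joint_actions A. x s a * r s a)"

definition proper_fun :: "('n \<Rightarrow> 'b set) \<Rightarrow> (('s \<Rightarrow> ('n \<Rightarrow> 'b) \<Rightarrow> real) \<Rightarrow> ereal) \<Rightarrow> bool" where
  "proper_fun A psi \<longleftrightarrow> (\<forall>r\<in>rewards A. psi r \<noteq> -\<infinity>) \<and> (\<exists>r\<in>rewards A. psi r \<noteq> \<infinity>)"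

definition convex_fun :: "('n \<Rightarrow> 'b set) \<Rightarrow> (('s \<Rightarrow> ('n \<Rightarrow> 'b) \<Rightarrow> real) \<Rightarrow> ereal) \<Rightarrow> bool" where
  "convex_fun A psi \<longleftrightarrow> (\<forall>r1\<in>rewards A. \<forall>r2\<in>rewards A. \<forall>t::real. 0 < t \<and> t < 1 \<longrightarrow>
      psi (\<lambda>s a. t * r1 s a + (1 - t) * r2 s a) \<le> ereal t * psi r1 + ereal (1 - t) * psi r2)"

definition closed_fun :: "('n \<Rightarrow> 'b set) \<Rightarrow> (('s \<Rightarrow> ('n \<Rightarrow> 'b) \<Rightarrow> real) \<Rightarrow> ereal) \<Rightarrow> bool" where
  "closed_fun A psi \<longleftrightarrow> (\<forall>r\<in>rewards A. \<forall>X. (\<forall>k. X k \<in> rewards A) \<and>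
      (\<forall>s a. (\<lambda>k. X k s a) \<longlonglongrightarrow> r s a) \<longrightarrow> psi r \<le> liminf (\<lambda>k. psi (X k)))"

text \<open>Conjugate with the reward sign convention: psi*(x) = sup_r (-<x,r> - psi(r)).\<close>
definition conjugate :: "('n \<Rightarrow> 'b set) \<Rightarrow> (('s::finite \<Rightarrow> ('n \<Rightarrow> 'b) \<Rightarrow> real) \<Rightarrow> ereal)
    \<Rightarrow> ('s \<Rightarrow> ('n \<Rightarrow> 'b) \<Rightarrow> real) \<Rightarrow> ereal" where
  "conjugate A psi x = (SUP r\<in>rewards A. ereal (- inner_sa A x r) - psi r)"

definition rl_obj ::
  "('n::finite \<Rightarrow> 'b set) \<Rightarrow> ('s::finite \<Rightarrow> ('n \<Rightarrow> 'b) \<Rightarrow> 's \<Rightarrow> real) \<Rightarrow> ('s \<Rightarrow> real) \<Rightarrow> real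
    \<Rightarrow> ('n \<Rightarrow> 's \<Rightarrow> 'b \<Rightarrow> real) \<Rightarrow> 'n \<Rightarrow> real \<Rightarrow> ('s \<Rightarrow> ('n \<Rightarrow> 'b) \<Rightarrow> real)
    \<Rightarrow> ('s \<Rightarrow> 'b \<Rightarrow> real) \<Rightarrow> real" where
  "rl_obj A T rho0 gamma piE i lam r p =
     lam * causal_entropy A T rho0 gamma (piE(i := p)) i
     + disc_exp A T rho0 gamma (joint_policy (piE(i := p))) r"

definition irl_obj ::
  "('n::finite \<Rightarrow> 'b set) \<Rightarrow> ('s::finite \<Rightarrow> ('n \<Rightarrow> 'b) \<Rightarrow> 's \<Rightarrow> real) \<Rightarrow> ('s \<Rightarrow> real) \<Rightarrow> real
    \<Rightarrow> ('n \<Rightarrow> 's \<Rightarrow> 'b \<Rightarrow> real) \<Rightarrow> 'n \<Rightarrow> real \<Rightarrow> (('s \<Rightarrow> ('n \<Rightarrow> 'b) \<Rightarrow> real) \<Rightarrow> ereal)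
    \<Rightarrow> ('s \<Rightarrow> ('n \<Rightarrow> 'b) \<Rightarrow> real) \<Rightarrow> ereal" where
  "irl_obj A T rho0 gamma piE i lam psi r =
     - psi r - ereal (SUP p\<in>policies A i. rl_obj A T rho0 gamma piE i lam r p)
     + ereal (disc_exp A T rho0 gamma (joint_policy piE) r)"

definition primal_obj ::
  "('n::finite \<Rightarrow> 'b set) \<Rightarrow> ('s::finite \<Rightarrow> ('n \<Rightarrow> 'b) \<Rightarrow> 's \<Rightarrow> real) \<Rightarrow> ('s \<Rightarrow> real) \<Rightarrow> real
    \<Rightarrow> ('n \<Rightarrow> 's \<Rightarrow> 'b \<Rightarrow> real) \<Rightarrow> 'n \<Rightarrow> real \<Rightarrow> (('s \<Rightarrow> ('n \<Rightarrow> 'b) \<Rightarrow> real) \<Rightarrow> ereal)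
    \<Rightarrow> ('s \<Rightarrow> 'b \<Rightarrow> real) \<Rightarrow> ereal" where
  "primal_obj A T rho0 gamma piE i lam psi p =
     ereal (- lam * causal_entropy A T rho0 gamma (piE(i := p)) i)
     + conjugate A psi (\<lambda>s a. occupancy A T rho0 gamma (joint_policy (piE(i := p))) s a
                              - occupancy A T rho0 gamma (joint_policy piE) s a)"

end

theory Submission
  imports Defs "HOL-Real_Asymp.Real_Asymp"
begin

lemma xlnx_lim: "((\<lambda>x::real. x * ln x) \<longlongrightarrow> 0) (at_right 0)" by real_asymp

lemma xlnx_cont: "continuous_on {0..} (\<lambda>x::real. x * ln x)"
  unfolding continuous_on_def
proof (intro ballI)
  fix x :: real assume "x \<in> {0..}"
  show "((\<lambda>x. x * ln x) \<longlongrightarrow> x * ln x) (at x within {0..})"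
  proof (cases "x = 0")
    case True then show ?thesis using xlnx_lim by (simp add: at_within_Ici_at_right)
  next
    case False then have "x > 0" using \<open>x \<in> {0..}\<close> by auto
    then have "isCont (\<lambda>x::real. x * ln x) x" by (auto intro!: continuous_intros)
    then show ?thesis using continuous_at_imp_continuous_at_within[of x _ "{0..}"] by (simp add: continuous_within)
  qed
qed

lemma xlnx_tendsto:
  assumes "(X \<longlongrightarrow> (x::real)) sequentially" "\<And>k. X k \<ge> 0"
  shows "((\<lambda>k. X k * ln (X k)) \<longlongrightarrow> x * ln x) sequentially"
proof -
  have "x \<ge> 0" using assms by (meson LIMSEQ_le_const)
  then show ?thesis
    using continuous_on_tendsto_compose[OF xlnx_cont assms(1)] assms by auto
qed

lemma xlnx_bound: assumes "0 \<le> x" "x \<le> (1::real)" shows "\<bar>x * ln x\<bar> \<le> 1"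
proof (cases "x = 0")
  case False
  then have xp: "x > 0" using assms by auto
  have l0: "ln x \<le> 0" using assms xp by auto
  moreover have "- ln x \<le> 1/x - 1" using ln_le_minus_one[of "1/x"] xp by (simp add: ln_div)
  ultimately have "x * (- ln x) \<le> x * (1/x - 1)" using xp by (intro mult_left_mono) auto
  moreover have "x * (1/x - 1) = 1 - x" using xp by (simp add: field_simps)
  ultimately have "x * (- ln x) \<le> 1 - x" by simp
  moreover have "x * ln x \<le> 0" using xp l0 by (simp add: mult_nonneg_nonpos)
  ultimately have "\<bar>x * ln x\<bar> = x * (- ln x)" by simp
  with \<open>x * (- ln x) \<le> 1 - x\<close> show ?thesis using assms by linarith
qed simp

definition stoch :: "('n \<Rightarrow> 'b set) \<Rightarrow> ('s \<Rightarrow> ('n \<Rightarrow> 'b) \<Rightarrow> real) \<Rightarrow> bool" where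
  "stoch A pol \<longleftrightarrow> (\<forall>s a. pol s a \<ge> 0) \<and> (\<forall>s. (\<Sum>a\<in>joint_actions A. pol s a) = 1)"

lemma mg_finite: "markov_game A T rho0 gamma \<Longrightarrow> finite (joint_actions A)"
  unfolding markov_game_def joint_actions_def by (auto intro!: finite_PiE)

lemma pol_le1: assumes "p \<in> policies A j" "finite (A j)" shows "0 \<le> p s b \<and> p s b \<le> 1"
proof -
  have nn: "\<forall>b. p s b \<ge> 0" and z: "\<forall>b. b \<notin> A j \<longrightarrow> p s b = 0" and sm: "(\<Sum>b\<in>A j. p s b) = 1"
    using assms(1) unfolding policies_def by auto
  show ?thesis
  proof (cases "b \<in> A j")
    case True
    then have "p s b \<le> (\<Sum>b\<in>A j. p s b)" using nn assms(2) by (intro member_le_sum) auto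
    then show ?thesis using nn sm by auto
  qed (use z in auto)
qed

lemma valid_stoch:
  assumes mg: "markov_game A T rho0 gamma" and v: "\<forall>j. P j \<in> policies A j"
  shows "stoch A (joint_policy P)"
proof -
  have fin: "\<And>j. finite (A j)" using mg unfolding markov_game_def by auto
  have nn: "P j s b \<ge> 0" for j s b using v unfolding policies_def by auto
  have sm: "(\<Sum>b\<in>A j. P j s b) = 1" for j s using v unfolding policies_def by auto
  have "(\<Sum>a\<in>joint_actions A. joint_policy P s a) = 1" for s
  proof -
    have "(\<Prod>j\<in>UNIV. \<Sum>b\<in>A j. P j s b) = (\<Sum>a\<in>PiE UNIV A. \<Prod>j\<in>UNIV. P j s (a j))"
      by (rule prod_sum_PiE) (auto simp: fin)
    then show ?thesis using sm by (simp add: joint_policy_def joint_actions_def)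
  qed
  moreover have "joint_policy P s a \<ge> 0" for s a unfolding joint_policy_def
    using nn by (auto intro: prod_nonneg)
  ultimately show ?thesis unfolding stoch_def by auto
qed

lemma stoch_le1: assumes "markov_game A T rho0 gamma" "stoch A pol" "a \<in> joint_actions A"
  shows "pol s a \<le> 1"
proof -
  have "pol s a \<le> (\<Sum>a\<in>joint_actions A. pol s a)"
    using assms mg_finite[OF assms(1)] unfolding stoch_def by (intro member_le_sum) auto
  then show ?thesis using assms(2) unfolding stoch_def by auto
qed

lemma sd_props:
  assumes mg: "markov_game A T rho0 gamma" and st: "stoch A pol"
  shows "(\<forall>s. state_dist A T rho0 pol t s \<ge> 0) \<and> (\<Sum>s\<in>UNIV. state_dist A T rho0 pol t s) = 1"
proof (induction t)
  case 0
  then show ?case using mg unfolding markov_game_def by auto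
next
  case (Suc t)
  let ?d = "state_dist A T rho0 pol t"
  have Tn: "\<forall>s. \<forall>a\<in>joint_actions A. (\<forall>s'. T s a s' \<ge> 0) \<and> (\<Sum>s'\<in>UNIV. T s a s') = 1"
    using mg unfolding markov_game_def by auto
  have pn: "\<And>s a. pol s a \<ge> 0" and ps: "\<And>s. (\<Sum>a\<in>joint_actions A. pol s a) = 1"
    using st unfolding stoch_def by auto
  have "(\<Sum>s'\<in>UNIV. \<Sum>s\<in>UNIV. \<Sum>a\<in>joint_actions A. ?d s * pol s a * T s a s')
      = (\<Sum>s\<in>UNIV. \<Sum>a\<in>joint_actions A. \<Sum>s'\<in>UNIV. ?d s * pol s a * T s a s')"
    by (rule trans[OF sum.swap], intro sum.cong refl, rule sum.swap)
  also have "\<dots> = (\<Sum>s\<in>UNIV. \<Sum>a\<in>joint_actions A. ?d s * pol s a)"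
    by (intro sum.cong refl) (simp add: sum_distrib_left[symmetric] Tn)
  also have "\<dots> = (\<Sum>s\<in>UNIV. ?d s)"
    by (intro sum.cong refl) (simp add: sum_distrib_left[symmetric] ps)
  finally have "(\<Sum>s'\<in>UNIV. \<Sum>s\<in>UNIV. \<Sum>a\<in>joint_actions A. ?d s * pol s a * T s a s') = 1"
    using Suc by simp
  moreover have "\<forall>s'. (\<Sum>s\<in>UNIV. \<Sum>a\<in>joint_actions A. ?d s * pol s a * T s a s') \<ge> 0"
    using Suc pn Tn by (auto intro!: sum_nonneg)
  ultimately show ?case by simp
qed

lemma sd_le1: assumes "markov_game A T rho0 gamma" "stoch A pol"
  shows "0 \<le> state_dist A T rho0 pol t s \<and> state_dist A T rho0 pol t s \<le> 1"
proof -
  note h = sd_props[OF assms, of t]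
  have "state_dist A T rho0 pol t s \<le> (\<Sum>s\<in>UNIV. state_dist A T rho0 pol t s)"
    using h by (intro member_le_sum) auto
  then show ?thesis using h by auto
qed

definition dterm where
  "dterm A T rho0 gamma pol f t = gamma ^ t * (\<Sum>s\<in>UNIV. \<Sum>a\<in>joint_actions A. state_dist A T rho0 pol t s * pol s a * f s a)"

lemma dterm_bound:
  fixes gamma B :: real and T :: "'s::finite \<Rightarrow> ('n::finite \<Rightarrow> 'b) \<Rightarrow> 's \<Rightarrow> real"
  assumes mg: "markov_game A T rho0 gamma" and st: "stoch A pol"
    and B: "\<forall>s. \<forall>a\<in>joint_actions A. \<bar>pol s a * f s a\<bar> \<le> B"
  shows "\<bar>dterm A T rho0 gamma pol f t\<bar> \<le> gamma ^ t * (CARD('s) * card (joint_actions A) * B)"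
proof -
  have g: "0 \<le> gamma" using mg unfolding markov_game_def by auto
  have "\<bar>\<Sum>s\<in>UNIV. \<Sum>a\<in>joint_actions A. state_dist A T rho0 pol t s * pol s a * f s a\<bar>
     \<le> (\<Sum>(s::'s)\<in>UNIV. \<Sum>a\<in>joint_actions A. B)"
  proof -
    have "\<bar>state_dist A T rho0 pol t s * pol s a * f s a\<bar> \<le> B" if "a \<in> joint_actions A" for s a
    proof -
      have "\<bar>state_dist A T rho0 pol t s * pol s a * f s a\<bar> = \<bar>state_dist A T rho0 pol t s\<bar> * \<bar>pol s a * f s a\<bar>"
        by (simp add: abs_mult mult.assoc)
      also have "\<dots> \<le> 1 * B" using sd_le1[OF mg st, of t s] B that
        by (intro mult_mono) auto
      finally show ?thesis by simp
    qed
    then have "(\<Sum>(s::'s)\<in>UNIV. \<Sum>a\<in>joint_actions A. \<bar>state_dist A T rho0 pol t s * pol s a * f s a\<bar>)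
       \<le> (\<Sum>(s::'s)\<in>UNIV. \<Sum>a\<in>joint_actions A. B)"
      by (intro sum_mono) auto
    moreover have "\<bar>\<Sum>s\<in>UNIV. \<Sum>a\<in>joint_actions A. state_dist A T rho0 pol t s * pol s a * f s a\<bar>
       \<le> (\<Sum>(s::'s)\<in>UNIV. \<Sum>a\<in>joint_actions A. \<bar>state_dist A T rho0 pol t s * pol s a * f s a\<bar>)"
      by (rule order.trans[OF sum_abs]) (intro sum_mono sum_abs)
    ultimately show ?thesis by linarith
  qed
  then show ?thesis unfolding dterm_def using g
    by (simp add: abs_mult mult_left_mono)
qed

lemma de_summable:
  fixes gamma B :: real and T :: "'s::finite \<Rightarrow> ('n::finite \<Rightarrow> 'b) \<Rightarrow> 's \<Rightarrow> real"
  assumes mg: "markov_game A T rho0 gamma" and st: "stoch A pol"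
    and B: "\<forall>s. \<forall>a\<in>joint_actions A. \<bar>pol s a * f s a\<bar> \<le> B"
  shows "summable (dterm A T rho0 gamma pol f)"
    "\<bar>disc_exp A T rho0 gamma pol f\<bar> \<le> (CARD('s) * card (joint_actions A) * B) / (1 - gamma)"
proof -
  have g: "0 \<le> gamma" "gamma < 1" using mg unfolding markov_game_def by auto
  let ?C = "CARD('s) * card (joint_actions A) * B"
  have sg: "summable (\<lambda>t. gamma ^ t * ?C)" using g by (intro summable_mult2 summable_geometric) auto
  have bd: "norm (dterm A T rho0 gamma pol f t) \<le> gamma ^ t * ?C" for t
    using dterm_bound[OF assms] by simp
  show sm: "summable (dterm A T rho0 gamma pol f)"
    by (rule summable_comparison_test[OF _ sg]) (use bd in auto)
  have sa: "summable (\<lambda>t. \<bar>dterm A T rho0 gamma pol f t\<bar>)"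
    by (rule summable_comparison_test[OF _ sg]) (use bd in auto)
  have "\<bar>suminf (dterm A T rho0 gamma pol f)\<bar> \<le> (\<Sum>t. \<bar>dterm A T rho0 gamma pol f t\<bar>)"
    using summable_norm[OF sa[unfolded real_norm_def[symmetric]]] by simp
  also have "\<dots> \<le> (\<Sum>t. gamma ^ t * ?C)"
    by (rule suminf_le[OF _ sa sg]) (use bd in auto)
  also have "\<dots> = ?C / (1 - gamma)" using g
    by (simp add: suminf_mult2[symmetric] suminf_geometric)
  finally show "\<bar>disc_exp A T rho0 gamma pol f\<bar> \<le> ?C / (1 - gamma)"
    unfolding disc_exp_def dterm_def[abs_def] by simp
qed


lemma de_eq: "disc_exp A T rho0 gamma pol f = suminf (dterm A T rho0 gamma pol f)"
  by (simp add: disc_exp_def dterm_def[abs_def])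

lemma de_summ_any:
  fixes gamma :: real and T :: "'s::finite \<Rightarrow> ('n::finite \<Rightarrow> 'b) \<Rightarrow> 's \<Rightarrow> real"
  assumes mg: "markov_game A T rho0 gamma" and st: "stoch A pol"
  shows "summable (dterm A T rho0 gamma pol f)"
proof (rule de_summable(1)[OF mg st])
  let ?B = "\<Sum>s\<in>UNIV. \<Sum>a\<in>joint_actions A. \<bar>f s a\<bar>"
  show "\<forall>s. \<forall>a\<in>joint_actions A. \<bar>pol s a * f s a\<bar> \<le> ?B"
  proof (intro allI ballI)
    fix s a assume a: "a \<in> joint_actions A"
    have "\<bar>pol s a * f s a\<bar> \<le> 1 * \<bar>f s a\<bar>" unfolding abs_mult
      using stoch_le1[OF mg st a, of s] st unfolding stoch_def by (intro mult_right_mono) auto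
    also have "\<dots> \<le> (\<Sum>a\<in>joint_actions A. \<bar>f s a\<bar>)"
      using a mg_finite[OF mg] member_le_sum[of a "joint_actions A" "\<lambda>a. \<bar>f s a\<bar>"] by auto
    also have "\<dots> \<le> ?B" by (rule member_le_sum) (auto intro: sum_nonneg)
    finally show "\<bar>pol s a * f s a\<bar> \<le> ?B" .
  qed
qed

lemma de_lin:
  fixes gamma :: real and T :: "'s::finite \<Rightarrow> ('n::finite \<Rightarrow> 'b) \<Rightarrow> 's \<Rightarrow> real"
  assumes mg: "markov_game A T rho0 gamma" and st: "stoch A pol"
  shows "disc_exp A T rho0 gamma pol (\<lambda>s a. f s a + c * g s a)
       = disc_exp A T rho0 gamma pol f + c * disc_exp A T rho0 gamma pol g"
proof -
  have "dterm A T rho0 gamma pol (\<lambda>s a. f s a + c * g s a) t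
      = dterm A T rho0 gamma pol f t + c * dterm A T rho0 gamma pol g t" for t
    unfolding dterm_def
    by (simp add: algebra_simps sum.distrib sum_distrib_left)
  then have "dterm A T rho0 gamma pol (\<lambda>s a. f s a + c * g s a)
      = (\<lambda>t. dterm A T rho0 gamma pol f t + c * dterm A T rho0 gamma pol g t)" by (rule ext)
  then show ?thesis unfolding de_eq
    using suminf_add[OF de_summ_any[OF mg st, of f] summable_mult[OF de_summ_any[OF mg st, of g], of c]]
      suminf_mult[OF de_summ_any[OF mg st, of g], of c]
    by simp
qed

lemma de_occ:
  fixes gamma :: real and T :: "'s::finite \<Rightarrow> ('n::finite \<Rightarrow> 'b) \<Rightarrow> 's \<Rightarrow> real"
  assumes mg: "markov_game A T rho0 gamma" and st: "stoch A pol"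
  shows "disc_exp A T rho0 gamma pol f = inner_sa A (occupancy A T rho0 gamma pol) f"
proof -
  have g: "0 \<le> gamma" "gamma < 1" using mg unfolding markov_game_def by auto
  have sg: "summable (\<lambda>t. gamma ^ t * state_dist A T rho0 pol t s)" for s
    by (rule summable_comparison_test[OF _ summable_geometric[of gamma]])
       (use g sd_le1[OF mg st] in \<open>auto simp: abs_mult intro!: mult_left_le\<close>)
  have sg2: "summable (\<lambda>t. gamma ^ t * state_dist A T rho0 pol t s * pol s a * f s a)" for s a
    using summable_mult2[OF summable_mult2[OF sg[of s], of "pol s a"], of "f s a"] by (simp add: mult.assoc)
  have "inner_sa A (occupancy A T rho0 gamma pol) f
     = (\<Sum>s\<in>UNIV. \<Sum>a\<in>joint_actions A. (\<Sum>t. gamma ^ t * state_dist A T rho0 pol t s * pol s a * f s a))"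
    unfolding inner_sa_def occupancy_def
  proof (intro sum.cong refl)
    fix s a
    show "pol s a * (\<Sum>t. gamma ^ t * state_dist A T rho0 pol t s) * f s a =
          (\<Sum>t. gamma ^ t * state_dist A T rho0 pol t s * pol s a * f s a)"
      using suminf_mult2[OF sg[of s], of "pol s a * f s a"] by (simp add: algebra_simps)
  qed
  also have "\<dots> = (\<Sum>s\<in>UNIV. (\<Sum>t. \<Sum>a\<in>joint_actions A. gamma ^ t * state_dist A T rho0 pol t s * pol s a * f s a))"
    by (intro sum.cong refl, rule suminf_sum[symmetric]) (use sg2 in auto)
  also have "\<dots> = (\<Sum>t. \<Sum>s\<in>UNIV. \<Sum>a\<in>joint_actions A. gamma ^ t * state_dist A T rho0 pol t s * pol s a * f s a)"
    by (rule suminf_sum[symmetric]) (use sg2 in \<open>auto intro!: summable_sum\<close>)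
  also have "\<dots> = disc_exp A T rho0 gamma pol f"
    unfolding disc_exp_def by (simp add: sum_distrib_left mult.assoc)
  finally show ?thesis by simp
qed

lemma sd_cont:
  assumes "\<forall>s. \<forall>a\<in>joint_actions A. (\<lambda>k. pol k s a) \<longlonglongrightarrow> pol' s a"
  shows "(\<lambda>k. state_dist A T rho0 (pol k) t s) \<longlonglongrightarrow> state_dist A T rho0 pol' t s"
proof (induction t arbitrary: s)
  case 0
  then show ?case by simp
next
  case (Suc t)
  show ?case using Suc assms by (simp, intro tendsto_sum tendsto_mult) auto
qed

lemma de_cont:
  fixes gamma B :: real and T :: "'s::finite \<Rightarrow> ('n::finite \<Rightarrow> 'b) \<Rightarrow> 's \<Rightarrow> real"
  assumes mg: "markov_game A T rho0 gamma" and st: "\<And>k. stoch A (pol k)"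
    and pc: "\<forall>s. \<forall>a\<in>joint_actions A. (\<lambda>k. pol k s a) \<longlonglongrightarrow> pol' s a"
    and hc: "\<forall>s. \<forall>a\<in>joint_actions A. (\<lambda>k. pol k s a * f k s a) \<longlonglongrightarrow> pol' s a * f' s a"
    and B: "\<And>k. \<forall>s. \<forall>a\<in>joint_actions A. \<bar>pol k s a * f k s a\<bar> \<le> B"
  shows "(\<lambda>k. disc_exp A T rho0 gamma (pol k) (f k)) \<longlonglongrightarrow> disc_exp A T rho0 gamma pol' f'"
proof -
  have g: "0 \<le> gamma" "gamma < 1" using mg unfolding markov_game_def by auto
  let ?C = "CARD('s) * card (joint_actions A) * B"
  have lim: "(\<lambda>k. dterm A T rho0 gamma (pol k) (f k) t) \<longlonglongrightarrow> dterm A T rho0 gamma pol' f' t" for t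
  proof -
    have "(\<lambda>k. gamma ^ t * (\<Sum>s\<in>UNIV. \<Sum>a\<in>joint_actions A. state_dist A T rho0 (pol k) t s * (pol k s a * f k s a)))
        \<longlonglongrightarrow> gamma ^ t * (\<Sum>s\<in>UNIV. \<Sum>a\<in>joint_actions A. state_dist A T rho0 pol' t s * (pol' s a * f' s a))"
      apply (intro tendsto_mult_left tendsto_sum)
      apply (rule tendsto_mult)
      using hc sd_cont[OF pc] apply auto
      done
    then show ?thesis unfolding dterm_def by (simp add: mult.assoc)
  qed
  have bd: "eventually (\<lambda>(t,k). norm (dterm A T rho0 gamma (pol k) (f k) t) \<le> gamma ^ t * ?C) (at_top \<times>\<^sub>F sequentially)"
    using dterm_bound[OF mg st B] by (intro always_eventually) auto
  have sg: "summable (\<lambda>t. gamma ^ t * ?C)" using g by (intro summable_mult2 summable_geometric) auto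
  from tannerys_theorem[OF lim bd sg] show ?thesis unfolding de_eq by simp
qed


lemma bw_finite:
  fixes X :: "nat \<Rightarrow> 'c \<Rightarrow> real"
  assumes "finite C" "\<And>k c. c \<in> C \<Longrightarrow> \<bar>X k c\<bar> \<le> B"
  shows "\<exists>\<sigma>. strict_mono \<sigma> \<and> (\<forall>c\<in>C. convergent (\<lambda>k. X (\<sigma> k) c))"
  using assms
proof (induction C rule: finite_induct)
  case empty
  show ?case by (rule exI[of _ id]) (auto simp: strict_mono_def)
next
  case (insert c C)
  then obtain \<sigma> where sm: "strict_mono \<sigma>" and cv: "\<forall>c\<in>C. convergent (\<lambda>k. X (\<sigma> k) c)" by auto
  obtain f where f: "strict_mono f" "monoseq (\<lambda>n. X (\<sigma> (f n)) c)"
    using seq_monosub[of "\<lambda>k. X (\<sigma> k) c"] by auto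
  have "Bseq (\<lambda>n. X (\<sigma> (f n)) c)" by (rule BseqI'[of _ B]) (use insert.prems in auto)
  then have c1: "convergent (\<lambda>n. X (\<sigma> (f n)) c)" using f(2) by (rule Bseq_monoseq_convergent)
  have "convergent (\<lambda>n. X (\<sigma> (f n)) c')" if "c' \<in> C" for c'
    using convergent_subseq_convergent[OF cv[rule_format, OF that] f(1)] by (simp add: o_def)
  moreover have "strict_mono (\<lambda>n. \<sigma> (f n))" using strict_mono_o[OF sm f(1)] by (simp add: o_def)
  ultimately show ?case using c1 by (intro exI[of _ "\<lambda>n. \<sigma> (f n)"]) auto
qed

lemma bound_any:
  fixes gamma :: real and T :: "'s::finite \<Rightarrow> ('n::finite \<Rightarrow> 'b) \<Rightarrow> 's \<Rightarrow> real"
    and pol f :: "'s \<Rightarrow> ('n \<Rightarrow> 'b) \<Rightarrow> real"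
  assumes mg: "markov_game A T rho0 gamma" and st: "stoch A pol" and a: "a \<in> joint_actions A"
  shows "\<bar>pol s a * f s a\<bar> \<le> (\<Sum>s\<in>UNIV. \<Sum>a\<in>joint_actions A. \<bar>f s a\<bar>)"
proof -
  have "\<bar>pol s a * f s a\<bar> \<le> 1 * \<bar>f s a\<bar>" unfolding abs_mult
    using stoch_le1[OF mg st a, of s] st unfolding stoch_def by (intro mult_right_mono) auto
  also have "\<dots> \<le> (\<Sum>a\<in>joint_actions A. \<bar>f s a\<bar>)"
    using a mg_finite[OF mg] member_le_sum[of a "joint_actions A" "\<lambda>a. \<bar>f s a\<bar>"] by auto
  also have "\<dots> \<le> (\<Sum>s\<in>UNIV. \<Sum>a\<in>joint_actions A. \<bar>f s a\<bar>)" by (rule member_le_sum) (auto intro: sum_nonneg)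
  finally show ?thesis .
qed

definition Qo :: "('n::finite \<Rightarrow> 's \<Rightarrow> 'b \<Rightarrow> real) \<Rightarrow> 'n \<Rightarrow> 's \<Rightarrow> ('n \<Rightarrow> 'b) \<Rightarrow> real" where
  "Qo piE i s a = (\<Prod>j\<in>UNIV - {i}. piE j s (a j))"

lemma jp_split: "joint_policy (piE(i := p)) s a = p s (a i) * Qo piE i s a"
  unfolding joint_policy_def Qo_def
  by (subst prod.remove[of UNIV i]) (auto intro!: prod.cong)

lemma Qo_bound:
  assumes mg: "markov_game A T rho0 gamma" and v: "\<forall>j. piE j \<in> policies A j"
  shows "0 \<le> Qo piE i s a \<and> Qo piE i s a \<le> 1"
proof -
  have fin: "\<And>j. finite (A j)" using mg unfolding markov_game_def by auto
  have "0 \<le> piE j s b \<and> piE j s b \<le> 1" for j b using pol_le1[OF v[rule_format] fin] .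
  then show ?thesis unfolding Qo_def by (auto intro: prod_nonneg prod_le_1)
qed

lemma valid_upd: "\<forall>j. piE j \<in> policies A j \<Longrightarrow> p \<in> policies A i \<Longrightarrow> \<forall>j. (piE(i := p)) j \<in> policies A j"
  by auto

lemma R_cont:
  fixes gamma :: real and T :: "'s::finite \<Rightarrow> ('n::finite \<Rightarrow> 'b) \<Rightarrow> 's \<Rightarrow> real"
    and piE :: "'n \<Rightarrow> 's \<Rightarrow> 'b \<Rightarrow> real"
  assumes mg: "markov_game A T rho0 gamma" and v: "\<forall>j. piE j \<in> policies A j"
    and pk: "\<And>k. p k \<in> policies A i" and p': "p' \<in> policies A i"
    and lim: "\<And>s b. (\<lambda>k. p k s b) \<longlonglongrightarrow> p' s b"
  shows "(\<lambda>k. causal_entropy A T rho0 gamma (piE(i := p k)) i) \<longlonglongrightarrow> causal_entropy A T rho0 gamma (piE(i := p')) i"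
    and "(\<lambda>k. disc_exp A T rho0 gamma (joint_policy (piE(i := p k))) f) \<longlonglongrightarrow> disc_exp A T rho0 gamma (joint_policy (piE(i := p'))) f"
proof -
  have fin: "\<And>j. finite (A j)" using mg unfolding markov_game_def by auto
  have st: "\<And>k. stoch A (joint_policy (piE(i := p k)))" by (rule valid_stoch[OF mg valid_upd[OF v pk]])
  have st': "stoch A (joint_policy (piE(i := p')))" by (rule valid_stoch[OF mg valid_upd[OF v p']])
  have pc: "\<forall>s. \<forall>a\<in>joint_actions A. (\<lambda>k. joint_policy (piE(i := p k)) s a) \<longlonglongrightarrow> joint_policy (piE(i := p')) s a"
    unfolding jp_split using lim by (auto intro: tendsto_mult_right)
  show "(\<lambda>k. disc_exp A T rho0 gamma (joint_policy (piE(i := p k))) f) \<longlonglongrightarrow> disc_exp A T rho0 gamma (joint_policy (piE(i := p'))) f"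
    by (rule de_cont[OF mg st pc, where B = "\<Sum>s\<in>UNIV. \<Sum>a\<in>joint_actions A. \<bar>f s a\<bar>"])
       (use pc bound_any[OF mg st] in \<open>auto intro: tendsto_mult_right\<close>)
  have pb: "0 \<le> p k s b \<and> p k s b \<le> 1" for k s b using pol_le1[OF pk fin] .
  have hc: "\<forall>s. \<forall>a\<in>joint_actions A. (\<lambda>k. joint_policy (piE(i := p k)) s a * - ln (p k s (a i)))
      \<longlonglongrightarrow> joint_policy (piE(i := p')) s a * - ln (p' s (a i))"
  proof (intro allI ballI)
    fix s a
    have "(\<lambda>k. p k s (a i) * ln (p k s (a i))) \<longlonglongrightarrow> p' s (a i) * ln (p' s (a i))"
      using xlnx_tendsto[OF lim] pb by auto
    then have "(\<lambda>k. - (Qo piE i s a * (p k s (a i) * ln (p k s (a i))))) \<longlonglongrightarrow> - (Qo piE i s a * (p' s (a i) * ln (p' s (a i))))"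
      by (intro tendsto_minus tendsto_mult_left)
    then show "(\<lambda>k. joint_policy (piE(i := p k)) s a * - ln (p k s (a i)))
      \<longlonglongrightarrow> joint_policy (piE(i := p')) s a * - ln (p' s (a i))"
      unfolding jp_split by (simp add: algebra_simps)
  qed
  have bd: "\<forall>s. \<forall>a\<in>joint_actions A. \<bar>joint_policy (piE(i := p k)) s a * - ln (p k s (a i))\<bar> \<le> 1" for k
  proof (intro allI ballI)
    fix s a
    have "\<bar>joint_policy (piE(i := p k)) s a * - ln (p k s (a i))\<bar> = \<bar>Qo piE i s a\<bar> * \<bar>p k s (a i) * ln (p k s (a i))\<bar>"
      unfolding jp_split by (simp add: abs_mult)
    also have "\<dots> \<le> 1 * 1" using Qo_bound[OF mg v, of i s a] xlnx_bound pb[of k s "a i"]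
      by (intro mult_mono) auto
    finally show "\<bar>joint_policy (piE(i := p k)) s a * - ln (p k s (a i))\<bar> \<le> 1" by simp
  qed
  show "(\<lambda>k. causal_entropy A T rho0 gamma (piE(i := p k)) i) \<longlonglongrightarrow> causal_entropy A T rho0 gamma (piE(i := p')) i"
    unfolding causal_entropy_def using de_cont[OF mg st pc, of "\<lambda>k s a. - ln (p k s (a i))" "\<lambda>s a. - ln (p' s (a i))" 1] hc bd
    by simp
qed


lemma ent_bd:
  fixes gamma :: real and T :: "'s::finite \<Rightarrow> ('n::finite \<Rightarrow> 'b) \<Rightarrow> 's \<Rightarrow> real"
    and piE :: "'n \<Rightarrow> 's \<Rightarrow> 'b \<Rightarrow> real"
  assumes mg: "markov_game A T rho0 gamma" and v: "\<forall>j. piE j \<in> policies A j"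
    and p: "p \<in> policies A i"
  shows "\<bar>causal_entropy A T rho0 gamma (piE(i := p)) i\<bar> \<le> CARD('s) * card (joint_actions A) * 1 / (1 - gamma)"
proof -
  have fin: "\<And>j. finite (A j)" using mg unfolding markov_game_def by auto
  have st: "stoch A (joint_policy (piE(i := p)))" by (rule valid_stoch[OF mg valid_upd[OF v p]])
  have pb: "0 \<le> p s b \<and> p s b \<le> 1" for s b using pol_le1[OF p fin] .
  have bd: "\<forall>s. \<forall>a\<in>joint_actions A. \<bar>joint_policy (piE(i := p)) s a * - ln (p s (a i))\<bar> \<le> 1"
  proof (intro allI ballI)
    fix s a
    have "\<bar>joint_policy (piE(i := p)) s a * - ln (p s (a i))\<bar> = \<bar>Qo piE i s a\<bar> * \<bar>p s (a i) * ln (p s (a i))\<bar>"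
      unfolding jp_split by (simp add: abs_mult)
    also have "\<dots> \<le> 1 * 1" using Qo_bound[OF mg v, of i s a] xlnx_bound pb[of s "a i"]
      by (intro mult_mono) auto
    finally show "\<bar>joint_policy (piE(i := p)) s a * - ln (p s (a i))\<bar> \<le> 1" by simp
  qed
  show ?thesis unfolding causal_entropy_def using de_summable(2)[OF mg st, of "\<lambda>s a. - ln (p s (a i))" 1] bd
    by simp
qed

lemma inner_diff: "inner_sa A (\<lambda>s a. x s a - y s a) r = inner_sa A x r - inner_sa A y r"
  unfolding inner_sa_def by (simp add: left_diff_distrib sum_subtractf)

lemma tk_lim: "(\<lambda>k. 1 / (real k + 2)) \<longlonglongrightarrow> 0" by real_asymp

theorem proposition1:
  fixes A :: "'n::finite \<Rightarrow> 'b set"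
    and T :: "'s::finite \<Rightarrow> ('n \<Rightarrow> 'b) \<Rightarrow> 's \<Rightarrow> real"
    and rho0 :: "'s \<Rightarrow> real" and gamma :: real
    and piE :: "'n \<Rightarrow> 's \<Rightarrow> 'b \<Rightarrow> real" and i :: 'n and lam :: real
    and psi :: "('s \<Rightarrow> ('n \<Rightarrow> 'b) \<Rightarrow> real) \<Rightarrow> ereal"
    and rI :: "'s \<Rightarrow> ('n \<Rightarrow> 'b) \<Rightarrow> real" and piI :: "'s \<Rightarrow> 'b \<Rightarrow> real"
  assumes game: "markov_game A T rho0 gamma"
    and demo: "\<forall>j. piE j \<in> policies A j"
    and lam_pos: "lam > 0"
    and psi_closed: "closed_fun A psi" and psi_proper: "proper_fun A psi"
    and psi_convex: "convex_fun A psi"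
    and irl_opt: "is_arg_max (irl_obj A T rho0 gamma piE i lam psi) (\<lambda>r. r \<in> rewards A) rI"
    and irl_unique: "\<forall>r. is_arg_max (irl_obj A T rho0 gamma piE i lam psi) (\<lambda>r. r \<in> rewards A) r \<longrightarrow> r = rI"
    and rl_opt: "is_arg_max (rl_obj A T rho0 gamma piE i lam rI) (\<lambda>p. p \<in> policies A i) piI"
    and rl_unique: "\<forall>p. is_arg_max (rl_obj A T rho0 gamma piE i lam rI) (\<lambda>p. p \<in> policies A i) p \<longrightarrow> p = piI"
    and primal_unique: "\<forall>p q. is_arg_min (primal_obj A T rho0 gamma piE i lam psi) (\<lambda>p. p \<in> policies A i) p
        \<and> is_arg_min (primal_obj A T rho0 gamma piE i lam psi) (\<lambda>p. p \<in> policies A i) q \<longrightarrow> p = q"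
  shows "is_arg_min (primal_obj A T rho0 gamma piE i lam psi) (\<lambda>p. p \<in> policies A i) piI"
proof -
  let ?Pol = "policies A i :: ('s \<Rightarrow> 'b \<Rightarrow> real) set"
  have g: "0 \<le> gamma" "gamma < 1" using game unfolding markov_game_def by auto
  have fin: "\<And>j. finite (A j)" using game unfolding markov_game_def by auto
  define E where "E = (\<lambda>p f. disc_exp A T rho0 gamma (joint_policy (piE(i := p))) f)"
  define H where "H = (\<lambda>p. causal_entropy A T rho0 gamma (piE(i := p)) i)"
  define R where "R = (\<lambda>r p. rl_obj A T rho0 gamma piE i lam r p)"
  define h where "h = (\<lambda>r. SUP p\<in>?Pol. R r p)"
  define EE where "EE = E (piE i)"
  define KH where "KH = CARD('s) * card (joint_actions A) * 1 / (1 - gamma)"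
  define K where "K = (\<lambda>f::'s \<Rightarrow> ('n \<Rightarrow> 'b) \<Rightarrow> real. CARD('s) * card (joint_actions A) * (\<Sum>s\<in>UNIV. \<Sum>a\<in>joint_actions A. \<bar>f s a\<bar>) / (1 - gamma))"
  have R_eq: "R r p = lam * H p + E p r" for r :: "'s \<Rightarrow> ('n \<Rightarrow> 'b) \<Rightarrow> real" and p :: "'s \<Rightarrow> 'b \<Rightarrow> real" unfolding R_def rl_obj_def E_def H_def by simp
  have EE_eq: "EE f = disc_exp A T rho0 gamma (joint_policy piE) f" for f
    unfolding EE_def E_def by simp
  have irl_eq: "irl_obj A T rho0 gamma piE i lam psi r = - psi r - ereal (h r) + ereal (EE r)" for r :: "'s \<Rightarrow> ('n \<Rightarrow> 'b) \<Rightarrow> real" 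
    unfolding irl_obj_def h_def R_def EE_eq by simp
  have piEi: "piE i \<in> ?Pol" using demo by auto
  have piI: "piI \<in> ?Pol" using rl_opt unfolding is_arg_max_def by auto
  have stP: "stoch A (joint_policy (piE(i := p)))" if "p \<in> ?Pol" for p :: "'s \<Rightarrow> 'b \<Rightarrow> real" 
    using valid_stoch[OF game valid_upd[OF demo that]] .
  have stE: "stoch A (joint_policy piE)" using valid_stoch[OF game demo] .
  have lin: "E p (\<lambda>s a. f s a + c * f' s a) = E p f + c * E p f'" if "p \<in> ?Pol" for p :: "'s \<Rightarrow> 'b \<Rightarrow> real" and f f' c
    unfolding E_def by (rule de_lin[OF game stP[OF that]])
  have Ebd: "\<bar>E p f\<bar> \<le> K f" if "p \<in> ?Pol" for p :: "'s \<Rightarrow> 'b \<Rightarrow> real" and f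
    unfolding E_def K_def using de_summable(2)[OF game stP[OF that]] bound_any[OF game stP[OF that]] by blast
  have Hbd: "\<bar>H p\<bar> \<le> KH" if "p \<in> ?Pol" for p :: "'s \<Rightarrow> 'b \<Rightarrow> real" 
    unfolding H_def KH_def using ent_bd[OF game demo that] .
  have bdd: "bdd_above (R r ` ?Pol)" for r :: "'s \<Rightarrow> ('n \<Rightarrow> 'b) \<Rightarrow> real" 
  proof (rule bdd_aboveI2)
    fix p assume p: "p \<in> ?Pol"
    have "lam * H p \<le> lam * KH" using Hbd[OF p] lam_pos by (intro mult_left_mono) auto
    then show "R r p \<le> lam * KH + K r" unfolding R_eq using Ebd[OF p, of r] by linarith
  qed
  have R_le_h: "R r p \<le> h r" if "p \<in> ?Pol" for r :: "'s \<Rightarrow> ('n \<Rightarrow> 'b) \<Rightarrow> real" and p :: "'s \<Rightarrow> 'b \<Rightarrow> real" 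
    unfolding h_def by (rule cSUP_upper[OF that bdd])
  have rlopt: "R rI p \<le> R rI piI" if "p \<in> ?Pol" for p :: "'s \<Rightarrow> 'b \<Rightarrow> real" 
    using rl_opt that unfolding is_arg_max_def R_def by (simp add: not_less)
  have irlopt: "irl_obj A T rho0 gamma piE i lam psi r \<le> irl_obj A T rho0 gamma piE i lam psi rI"
    if "r \<in> rewards A" for r :: "'s \<Rightarrow> ('n \<Rightarrow> 'b) \<Rightarrow> real" 
    using irl_opt that unfolding is_arg_max_def by (simp add: not_less)
  have psi_ninf: "psi r \<noteq> -\<infinity>" if "r \<in> rewards A" for r :: "'s \<Rightarrow> ('n \<Rightarrow> 'b) \<Rightarrow> real" 
    using psi_proper that unfolding proper_fun_def by auto
  have rI: "rI \<in> rewards A" using irl_opt unfolding is_arg_max_def by auto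
  obtain cs where cs: "psi rI = ereal cs"
  proof -
    obtain r0 where r0: "r0 \<in> rewards A" "psi r0 \<noteq> \<infinity>" using psi_proper unfolding proper_fun_def by auto
    then obtain c0 where "psi r0 = ereal c0" using psi_ninf[OF r0(1)] by (cases "psi r0") auto
    then have "irl_obj A T rho0 gamma piE i lam psi r0 = ereal (- c0 - h r0 + EE r0)"
      unfolding irl_eq by simp
    then have "irl_obj A T rho0 gamma piE i lam psi rI \<noteq> -\<infinity>" using irlopt[OF r0(1)] by auto
    then have "psi rI \<noteq> \<infinity>" unfolding irl_eq by auto
    then show ?thesis using that psi_ninf[OF rI] by (cases "psi rI") auto
  qed
  have core: "EE (\<lambda>s a. r s a - rI s a) - E piI (\<lambda>s a. r s a - rI s a) \<le> c - cs"
    if r: "r \<in> rewards A" and c: "psi r = ereal c" for r :: "'s \<Rightarrow> ('n \<Rightarrow> 'b) \<Rightarrow> real" and c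
  proof -
    define d where "d = (\<lambda>s a. r s a - rI s a)"
    define Kd where "Kd = K d"
    have step: "\<exists>p\<in>?Pol. cs - c + EE d - t < E p d \<and> R rI piI - t * t - 2 * t * Kd < R rI p"
      if t: "0 < t" "t < 1" for t
    proof -
      define rt where "rt = (\<lambda>s a. t * r s a + (1 - t) * rI s a)"
      have rt_eq: "rt = (\<lambda>s a. rI s a + t * d s a)" unfolding rt_def d_def
        by (intro ext) (simp add: algebra_simps)
      have rt_rew: "rt \<in> rewards A" using r rI unfolding rt_def rewards_def by auto
      have "psi rt \<le> ereal t * psi r + ereal (1 - t) * psi rI"
        using psi_convex r rI t unfolding convex_fun_def rt_def by blast
      then have psi_rt: "psi rt \<le> ereal (t * c + (1 - t) * cs)" using c cs by simp
      then obtain ct where ct: "psi rt = ereal ct" using psi_ninf[OF rt_rew] by (cases "psi rt") auto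
      have ct_le: "ct \<le> t * c + (1 - t) * cs" using psi_rt ct by simp
      have "ereal (- ct - h rt + EE rt) \<le> ereal (- cs - h rI + EE rI)"
        using irlopt[OF rt_rew] unfolding irl_eq ct cs by simp
      then have I0: "- ct - h rt + EE rt \<le> - cs - h rI + EE rI" by simp
      have EErt: "EE rt = EE rI + t * EE d" unfolding rt_eq EE_def by (rule lin[OF piEi])
      have Ert: "E q rt = E q rI + t * E q d" if "q \<in> ?Pol" for q :: "'s \<Rightarrow> 'b \<Rightarrow> real" unfolding rt_eq by (rule lin[OF that])
      have Rrt: "R rt q = R rI q + t * E q d" if "q \<in> ?Pol" for q :: "'s \<Rightarrow> 'b \<Rightarrow> real" 
        unfolding R_eq Ert[OF that] by simp
      have hlow: "h rI + t * cs - t * c + t * EE d \<le> h rt"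
        using I0 EErt ct_le by (simp add: algebra_simps)
      have "h rt - t * t < h rt" using t by simp
      then obtain p where p: "p \<in> ?Pol" and pl: "h rt - t * t < R rt p"
        unfolding h_def using less_cSUP_iff[OF _ bdd] piEi by blast
      have A1: "R rI p \<le> h rI" by (rule R_le_h[OF p])
      have A2: "R rt piI \<le> h rt" by (rule R_le_h[OF piI])
      have B1: "\<bar>E p d\<bar> \<le> Kd" "\<bar>E piI d\<bar> \<le> Kd" unfolding Kd_def using Ebd p piI by auto
      have B2: "t * E p d \<le> t * Kd" using B1 t by (intro mult_left_mono) auto
      have B3: "- (t * Kd) \<le> t * E piI d" using B1 t mult_left_mono[of "- Kd" "E piI d" t] by auto
      have "t * (cs - c + EE d - t) < t * E p d"
        using hlow pl A1 Rrt[OF p] by (simp add: algebra_simps)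
      then have i1: "cs - c + EE d - t < E p d" using t by simp
      have i2: "R rI piI - t * t - 2 * t * Kd < R rI p"
        using pl A2 Rrt[OF p] Rrt[OF piI] B2 B3 by linarith
      show ?thesis using p i1 i2 by blast
    qed
    define tk where "tk = (\<lambda>k::nat. 1 / (real k + 2))"
    have tk: "0 < tk k" "tk k < 1" for k unfolding tk_def by auto
    have "\<forall>k. \<exists>p. p \<in> ?Pol \<and> cs - c + EE d - tk k < E p d \<and> R rI piI - tk k * tk k - 2 * tk k * Kd < R rI p"
      using step[OF tk] by blast
    then obtain P where P: "\<And>k. P k \<in> ?Pol"
      and P1: "\<And>k. cs - c + EE d - tk k < E (P k) d"
      and P2: "\<And>k. R rI piI - tk k * tk k - 2 * tk k * Kd < R rI (P k)"
      by metis
    have Pb: "\<bar>P k s b\<bar> \<le> 1" for k s b using pol_le1[OF P fin, of k s b] by auto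
    obtain \<sigma> where sm: "strict_mono \<sigma>" and cv: "\<forall>c\<in>UNIV \<times> A i. convergent (\<lambda>k. (\<lambda>k (s, b). P k s b) (\<sigma> k) c)"
      using bw_finite[of "UNIV \<times> A i" "\<lambda>k (s,b). P k s b" 1] fin Pb by auto
    define pb where "pb = (\<lambda>s b. if b \<in> A i then lim (\<lambda>k. P (\<sigma> k) s b) else 0)"
    have Pz: "P k s b = 0" if "b \<notin> A i" for k s b using P[of k] that unfolding policies_def by auto
    have plim: "(\<lambda>k. P (\<sigma> k) s b) \<longlonglongrightarrow> pb s b" for s b
    proof (cases "b \<in> A i")
      case True
      then have "convergent (\<lambda>k. P (\<sigma> k) s b)" using cv by auto
      then show ?thesis using True unfolding pb_def by (simp add: convergent_LIMSEQ_iff)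
    next
      case False
      then show ?thesis unfolding pb_def using Pz by simp
    qed
    have pbP: "pb \<in> ?Pol"
      unfolding policies_def
    proof (intro CollectI allI conjI impI)
      fix s b
      show "0 \<le> pb s b" using plim[of s b] P unfolding policies_def
        by (intro LIMSEQ_le_const[OF plim[of s b]]) auto
      show "b \<notin> A i \<Longrightarrow> pb s b = 0" unfolding pb_def by simp
    next
      fix s
      have "(\<lambda>k. \<Sum>b\<in>A i. P (\<sigma> k) s b) \<longlonglongrightarrow> (\<Sum>b\<in>A i. pb s b)"
        by (intro tendsto_sum plim)
      moreover have "(\<lambda>k. \<Sum>b\<in>A i. P (\<sigma> k) s b) = (\<lambda>k. 1)" using P unfolding policies_def by auto
      ultimately show "(\<Sum>b\<in>A i. pb s b) = 1" using LIMSEQ_unique tendsto_const by metis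
    qed
    have Rlim: "(\<lambda>k. R rI (P (\<sigma> k))) \<longlonglongrightarrow> R rI pb"
      unfolding R_eq H_def E_def
      by (intro tendsto_intros R_cont[OF game demo P pbP plim])
    have Elim: "(\<lambda>k. E (P (\<sigma> k)) d) \<longlonglongrightarrow> E pb d"
      unfolding E_def by (rule R_cont(2)[OF game demo P pbP plim])
    have tlim: "(\<lambda>k. tk (\<sigma> k)) \<longlonglongrightarrow> 0"
      using LIMSEQ_subseq_LIMSEQ[OF tk_lim sm] unfolding tk_def by (simp add: o_def)
    have "(\<lambda>k. R rI piI - tk (\<sigma> k) * tk (\<sigma> k) - 2 * tk (\<sigma> k) * Kd) \<longlonglongrightarrow> R rI piI - 0 * 0 - 2 * 0 * Kd"
      by (intro tendsto_intros tlim)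
    then have "R rI piI \<le> R rI pb"
      using Rlim P2 by (intro LIMSEQ_le) (auto intro: less_imp_le)
    then have "is_arg_max (rl_obj A T rho0 gamma piE i lam rI) (\<lambda>p. p \<in> policies A i) pb"
      unfolding is_arg_max_def using pbP rlopt unfolding R_def by (auto simp: not_less intro: order.trans)
    then have pbI: "pb = piI" using rl_unique by blast
    have "(\<lambda>k. cs - c + EE d - tk (\<sigma> k)) \<longlonglongrightarrow> cs - c + EE d - 0"
      by (intro tendsto_intros tlim)
    then have "cs - c + EE d \<le> E pb d"
      using Elim P1 by (intro LIMSEQ_le) (auto intro: less_imp_le)
    then show ?thesis unfolding d_def[symmetric] pbI by simp
  qed
  define occ where "occ = (\<lambda>p. occupancy A T rho0 gamma (joint_policy (piE(i := p))))"
  define occE where "occE = occupancy A T rho0 gamma (joint_policy piE)"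
  have inner_eq: "inner_sa A (\<lambda>s a. occ p s a - occE s a) r = E p r - EE r" if "p \<in> ?Pol" for p :: "'s \<Rightarrow> 'b \<Rightarrow> real" and r :: "'s \<Rightarrow> ('n \<Rightarrow> 'b) \<Rightarrow> real" 
    unfolding inner_diff occ_def occE_def E_def EE_eq
    using de_occ[OF game stP[OF that]] de_occ[OF game stE] by simp
  have Esplit: "E p r = E p rI + 1 * E p (\<lambda>s a. r s a - rI s a)" if "p \<in> ?Pol" for p :: "'s \<Rightarrow> 'b \<Rightarrow> real" and r :: "'s \<Rightarrow> ('n \<Rightarrow> 'b) \<Rightarrow> real" 
  proof -
    have "r = (\<lambda>s a. rI s a + 1 * (r s a - rI s a))" by simp
    then show ?thesis using lin[OF that, of rI 1 "\<lambda>s a. r s a - rI s a"] by metis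
  qed
  have conjI_le: "conjugate A psi (\<lambda>s a. occ piI s a - occE s a) \<le> ereal (- (E piI rI - EE rI) - cs)"
    unfolding conjugate_def
  proof (rule SUP_least)
    fix r :: "'s \<Rightarrow> ('n \<Rightarrow> 'b) \<Rightarrow> real" assume r: "r \<in> rewards A"
    show "ereal (- inner_sa A (\<lambda>s a. occ piI s a - occE s a) r) - psi r \<le> ereal (- (E piI rI - EE rI) - cs)"
    proof (cases "psi r")
      case (real c)
      have "EE (\<lambda>s a. r s a - rI s a) - E piI (\<lambda>s a. r s a - rI s a) \<le> c - cs" using core[OF r real] .
      moreover have "EE r = EE rI + 1 * EE (\<lambda>s a. r s a - rI s a)" unfolding EE_def by (rule Esplit[OF piEi])
      moreover note Esplit[OF piI, of r]
      ultimately show ?thesis unfolding inner_eq[OF piI] real by simp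
    qed (use psi_ninf[OF r] in auto)
  qed
  have conj_ge: "ereal (- (E p rI - EE rI) - cs) \<le> conjugate A psi (\<lambda>s a. occ p s a - occE s a)"
    if "p \<in> ?Pol" for p :: "'s \<Rightarrow> 'b \<Rightarrow> real" 
  proof -
    have "ereal (- inner_sa A (\<lambda>s a. occ p s a - occE s a) rI) - psi rI \<le> conjugate A psi (\<lambda>s a. occ p s a - occE s a)"
      unfolding conjugate_def by (rule SUP_upper[OF rI])
    then show ?thesis unfolding inner_eq[OF that] cs by simp
  qed
  have primal_eq: "primal_obj A T rho0 gamma piE i lam psi p = ereal (- lam * H p) + conjugate A psi (\<lambda>s a. occ p s a - occE s a)" for p :: "'s \<Rightarrow> 'b \<Rightarrow> real" 
    unfolding primal_obj_def H_def occ_def occE_def by simp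
  show ?thesis
    unfolding is_arg_min_def
  proof (intro conjI notI)
    show "piI \<in> ?Pol" by (rule piI)
  next
    assume "\<exists>p. p \<in> ?Pol \<and> primal_obj A T rho0 gamma piE i lam psi p < primal_obj A T rho0 gamma piE i lam psi piI"
    then obtain p where p: "p \<in> ?Pol" and lt: "primal_obj A T rho0 gamma piE i lam psi p < primal_obj A T rho0 gamma piE i lam psi piI" by blast
    have "primal_obj A T rho0 gamma piE i lam psi piI \<le> ereal (- lam * H piI) + ereal (- (E piI rI - EE rI) - cs)"
      unfolding primal_eq by (rule add_left_mono[OF conjI_le])
    also have "\<dots> \<le> ereal (- lam * H p) + ereal (- (E p rI - EE rI) - cs)"
      using rlopt[OF p] unfolding R_eq by simp
    also have "\<dots> \<le> primal_obj A T rho0 gamma piE i lam psi p"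
      unfolding primal_eq by (rule add_left_mono[OF conj_ge[OF p]])
    finally show False using lt by simp
  qed
qed

end
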